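(* Let $N=2^n$ with $n\ge 2$, let $\mathbf{s}$ be a Zadoff–Chu sequence of length $N$, and let $\pi(x)=a_mx^m+\dots+a_1x+a_0\in\mathbb{Z}_N[x]$ be a permutation polynomial over $\mathbb{Z}_N$ (equivalently, $a_1$ is odd, $a_2+a_4+a_6+\cdots$ is even and $a_3+a_5+a_7+\cdots$ is even). Then (i) $\mathbf{s}\circ\pi$ is a CAZAC sequence, and (ii) $\mathbf{s}\circ\pi^{-1}$ is a CAZAC sequence.
   Context: $\xi_N=e^{-2\pi\sqrt{-1}/N}$, and $\xi_N^{x/2}$ means $e^{-\pi\sqrt{-1}x/N}$. A Zadoff–Chu sequence of length $N$ is $\mathbf{s}$ with $s(k)=\xi_N^{u(k^2+(N\bmod 2)k+2lk)/2}$, $0\le k<N$, where $\gcd(u,N)=1$ and $l$ is an integer. A permutation polynomial over $\mathbb{Z}_N$ is a polynomial inducing a bijection $k\mapsto\pi(k)\bmod N$ of $\mathbb{Z}_N$; $\pi^{-1}$ is the inverse permutation. $(\mathbf{s}\circ\sigma)(k)=s(\sigma(k))$. A sequence is CAZAC if all entries have modulus 1 and its periodic auto-correlation $\theta(d)=\sum_{k=0}^{N-1}y(k)y^*(k+d)$ (indices mod $N$) vanishes for all $0<d<N$. *)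

theory Defs
  imports Complex_Main "HOL-Computational_Algebra.Polynomial"
begin

text \<open>Sequences of length N are functions int => complex, used on indices 0..N-1.\<close>

text \<open>Zadoff-Chu sequence: s(k) = xi_N^(u(k^2 + (N mod 2) k + 2 l k)/2) with
  xi_N = exp(-2 pi i / N), i.e. s(k) = exp(- pi i u (k^2 + (N mod 2) k + 2 l k) / N).\<close>
definition zc_seq :: "int \<Rightarrow> int \<Rightarrow> int \<Rightarrow> int \<Rightarrow> complex" where
  "zc_seq N u l k =
     exp (- (pi * \<i> * of_int (u * (k^2 + (N mod 2) * k + 2 * l * k)) / of_int N))"

definition is_zadoff_chu :: "int \<Rightarrow> (int \<Rightarrow> complex) \<Rightarrow> bool" where
  "is_zadoff_chu N s \<longleftrightarrow> (\<exists>u l. gcd u N = 1 \<and> (\<forall>k\<in>{0..<N}. s k = zc_seq N u l k))"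

definition perm_poly :: "int \<Rightarrow> int poly \<Rightarrow> bool" where
  "perm_poly N p \<longleftrightarrow> bij_betw (\<lambda>k. poly p k mod N) {0..<N} {0..<N}"

definition perm_of_poly :: "int \<Rightarrow> int poly \<Rightarrow> int \<Rightarrow> int" where
  "perm_of_poly N p k = poly p k mod N"

definition inv_perm_of_poly :: "int \<Rightarrow> int poly \<Rightarrow> int \<Rightarrow> int" where
  "inv_perm_of_poly N p = inv_into {0..<N} (perm_of_poly N p)"

definition autocorr :: "int \<Rightarrow> (int \<Rightarrow> complex) \<Rightarrow> int \<Rightarrow> complex" where
  "autocorr N y d = (\<Sum>k\<in>{0..<N}. y k * cnj (y ((k + d) mod N)))"

definition is_CAZAC :: "int \<Rightarrow> (int \<Rightarrow> complex) \<Rightarrow> bool" where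
  "is_CAZAC N y \<longleftrightarrow> (\<forall>k\<in>{0..<N}. cmod (y k) = 1) \<and> (\<forall>d. 0 < d \<and> d < N \<longrightarrow> autocorr N y d = 0)"

end

theory Submission
  imports Defs "HOL-Library.FuncSet"
begin


lemma poly_diff_dvd: "(x - y) dvd (poly P x - poly P (y::int))"
proof (induct P)
  case 0 then show ?case by simp
next
  case (pCons c R)
  have e: "poly (pCons c R) x - poly (pCons c R) y = (x - y) * poly R x + y * (poly R x - poly R y)"
    by (simp add: algebra_simps)
  show ?case unfolding e using pCons(2) by (simp add: dvd_add)
qed

lemma poly_mod_cong: "x mod m = y mod m \<Longrightarrow> poly P x mod m = poly P (y::int) mod m"
  by (meson dvd_trans mod_eq_dvd_iff poly_diff_dvd)

lemma factA: "a^2 dvd (poly P (x+a) - poly P x - a * poly (pderiv P) (x::int))"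
proof (induct P arbitrary: x)
  case 0 then show ?case by simp
next
  case (pCons c R)
  have e: "poly (pCons c R) (x+a) - poly (pCons c R) x - a * poly (pderiv (pCons c R)) x
     = x * (poly R (x+a) - poly R x - a * poly (pderiv R) x) + a * (poly R (x+a) - poly R x)"
    by (simp add: pderiv_pCons algebra_simps)
  have "a dvd (poly R (x+a) - poly R x)" using poly_diff_dvd[of "x+a" x R] by simp
  then have "a^2 dvd a * (poly R (x+a) - poly R x)" by (simp add: power2_eq_square)
  moreover have "a^2 dvd x * (poly R (x+a) - poly R x - a * poly (pderiv R) x)"
    using pCons(2) by simp
  ultimately show ?case unfolding e by (simp add: dvd_add)
qed

lemma factA': obtains k where "poly P (x+a) - poly P x = a * poly (pderiv P) (x::int) + a^2 * k"
  using factA[of a P x] by (metis dvdE diff_eq_eq add.commute)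

lemma C1:
  fixes P :: "int poly"
  assumes "even d" "even t"
  shows "(2*d*t) dvd (poly P (x+d+t) - poly P (x+d) - poly P (x+t) + poly P x)"
proof (induct P arbitrary: x)
  case 0 then show ?case by simp
next
  case (pCons c R)
  let ?R = "poly R" and ?R' = "poly (pderiv R)"
  have e: "poly (pCons c R) (x+d+t) - poly (pCons c R) (x+d) - poly (pCons c R) (x+t) + poly (pCons c R) x
     = x * (?R (x+d+t) - ?R (x+d) - ?R (x+t) + ?R x) + d * (?R (x+d+t) - ?R (x+d)) + t * (?R (x+d+t) - ?R (x+t))"
    by (simp add: algebra_simps)
  obtain k1 where k1: "?R (x+d+t) - ?R (x+d) = t * ?R' (x+d) + t^2 * k1"
    using factA'[of R "x+d" t] by (metis add.assoc)
  obtain k2 where k2: "?R (x+d+t) - ?R (x+t) = d * ?R' (x+t) + d^2 * k2"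
    using factA'[of R "x+t" d] by (metis add.assoc add.commute)
  obtain j where j: "?R' (x+d) - ?R' (x+t) = (d - t) * j"
    using poly_diff_dvd[of "x+d" "x+t" "pderiv R"] by (auto elim: dvdE)
  obtain d2 where d2: "d = 2*d2" using assms(1) by (auto elim: evenE)
  obtain t2 where t2: "t = 2*t2" using assms(2) by (auto elim: evenE)
  have "d * (?R (x+d+t) - ?R (x+d)) + t * (?R (x+d+t) - ?R (x+t))
      = 2*d*t * (?R' (x+t) + (d2 - t2) * j + t2 * k1 + d2 * k2)"
  proof -
    have j': "?R' (x+d) = ?R' (x+t) + (d-t)*j" using j by simp
    show ?thesis unfolding k1 k2 j' unfolding d2 t2 by (simp add: algebra_simps power2_eq_square)
  qed
  then have "2*d*t dvd d * (?R (x+d+t) - ?R (x+d)) + t * (?R (x+d+t) - ?R (x+t))" by simp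
  moreover have "2*d*t dvd x * (?R (x+d+t) - ?R (x+d) - ?R (x+t) + ?R x)" using pCons(2) by simp
  ultimately show ?case unfolding e by (metis add.assoc dvd_add)
qed

lemma L:
  fixes P :: "int poly"
  assumes "N dvd a^2" "N dvd 2*a" "\<forall>z. odd (poly (pderiv P) z)"
  shows "N dvd (poly P (x+a+b) - poly P (x+a) - poly P (x+b) + poly P x)"
proof -
  obtain k1 where k1: "poly P (x+b+a) - poly P (x+b) = a * poly (pderiv P) (x+b) + a^2 * k1"
    using factA' by blast
  obtain k2 where k2: "poly P (x+a) - poly P x = a * poly (pderiv P) x + a^2 * k2"
    using factA' by blast
  have "even (poly (pderiv P) (x+b) - poly (pderiv P) x)" using assms(3) by simp
  then obtain r where r: "poly (pderiv P) (x+b) = poly (pderiv P) x + 2*r"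
    by (metis evenE diff_add_cancel add.commute)
  have "poly P (x+a+b) - poly P (x+a) - poly P (x+b) + poly P x = (2*a)*r + a^2*(k1-k2)"
    using k1 k2 r by (simp add: algebra_simps)
  then show ?thesis using assms(1,2) by simp
qed

lemma pow2_odd: "(d::int) > 0 \<Longrightarrow> \<exists>v q. d = 2^v * q \<and> odd q"
proof (induct "nat d" arbitrary: d rule: less_induct)
  case less
  show ?case
  proof (cases "odd d")
    case True then show ?thesis by (intro exI[of _ 0] exI[of _ d]) simp
  next
    case False then obtain e where e: "d = 2*e" by (auto elim: evenE)
    with less.prems have "e > 0" "nat e < nat d" by auto
    from less.hyps[OF this(2) this(1)] obtain v q where "e = 2^v*q" "odd q" by blast
    then show ?thesis using e by (intro exI[of _ "Suc v"] exI[of _ q]) simp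
  qed
qed

lemma F1:
  fixes P :: "int poly"
  assumes "\<forall>z. odd (poly (pderiv P) z)" "\<forall>z. odd (poly P (z+1) - poly P z)" "odd q"
  shows "\<exists>r. odd r \<and> poly P (x + 2^v*q) - poly P x = 2^v * r"
proof (cases "v = 0")
  case True
  have "(x + q - (x+1)) dvd (poly P (x+q) - poly P (x+1))" by (rule poly_diff_dvd)
  moreover have "2 dvd (x + q - (x+1))" using assms(3) by simp
  ultimately have "even (poly P (x+q) - poly P (x+1))" using dvd_trans by blast
  moreover have "odd (poly P (x+1) - poly P x)" using assms(2) by blast
  ultimately have "odd (poly P (x+q) - poly P x)"
    by (metis diff_add_cancel odd_add add.commute)
  then show ?thesis using True by simp
next
  case False
  obtain k where k: "poly P (x + 2^v*q) - poly P x = 2^v*q * poly (pderiv P) x + (2^v*q)^2 * k"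
    using factA' by blast
  have "poly P (x + 2^v*q) - poly P x = 2^v * (q * poly (pderiv P) x + 2^v*q^2*k)"
    unfolding k by (simp add: algebra_simps power2_eq_square)
  moreover have "odd (q * poly (pderiv P) x + 2^v*q^2*k)"
    using assms(1,3) False by simp
  ultimately show ?thesis by blast
qed

lemma sq_core:
  fixes A B C D N M r :: int
  assumes "N dvd (D - C - B + A)" "(B-A)*(C-A) = M*r" "odd r" "N = 2*M"
  shows "(2*N) dvd (D^2 - C^2 - B^2 + A^2 - N)"
proof -
  obtain e where e: "D = B + C - A + N*e" using assms(1)
    by (metis dvdE diff_add_cancel add.commute diff_diff_eq2 add_diff_eq)
  obtain r2 where r2: "r = 2*r2 + 1" using assms(3) by (metis oddE)
  have "D^2 - C^2 - B^2 + A^2 - N = 2*(B-A)*(C-A) + 2*N*e*(B+C-A) + N*N*e^2 - N"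
    unfolding e by (simp add: algebra_simps power2_eq_square)
  also have "... = (2*N) * (r2 + e*(B+C-A) + M*e^2)"
    using assms(2,4) r2 by (simp add: algebra_simps power2_eq_square)
  finally show ?thesis by simp
qed



lemma perm_deriv_odd:
  assumes "n \<ge> 2" "N = 2^n" "perm_poly N p"
  shows "odd (poly (pderiv p) z)"
proof (rule ccontr)
  assume ev: "\<not> odd (poly (pderiv p) z)"
  define M :: int where "M = 2^(n-1)"
  have NM: "N = 2*M" using assms(1,2) unfolding M_def
    by (metis Suc_diff_1 less_le_trans pos2 power_Suc)
  have Mev: "even M" using assms(1) unfolding M_def by (simp add: dvd_power)
  have Mpos: "M > 0" unfolding M_def by simp
  define x1 where "x1 = z mod M"
  have x1: "0 \<le> x1" "x1 < M" using Mpos unfolding x1_def by auto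
  have "(z - x1) dvd (poly (pderiv p) z - poly (pderiv p) x1)" by (rule poly_diff_dvd)
  moreover have "M dvd (z - x1)" unfolding x1_def by (simp add: minus_mod_eq_mult_div)
  ultimately have "2 dvd (poly (pderiv p) z - poly (pderiv p) x1)" using Mev dvd_trans by blast
  then have "even (poly (pderiv p) x1)" using ev by auto
  then obtain r where r: "poly (pderiv p) x1 = 2*r" by (auto elim: evenE)
  obtain k where k: "poly p (x1+M) - poly p x1 = M * poly (pderiv p) x1 + M^2 * k"
    using factA' by blast
  obtain m2 where m2: "M = 2*m2" using Mev by (auto elim: evenE)
  have "poly p (x1+M) - poly p x1 = N * (r + m2*k)"
    unfolding k r NM by (simp add: m2 algebra_simps power2_eq_square)
  then have "poly p (x1+M) mod N = poly p x1 mod N" by (simp add: mod_eq_dvd_iff)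
  moreover have "inj_on (\<lambda>k. poly p k mod N) {0..<N}"
    using assms(3) unfolding perm_poly_def bij_betw_def by blast
  moreover have "x1 \<in> {0..<N}" "x1 + M \<in> {0..<N}" using x1 NM by auto
  ultimately have "x1 + M = x1" unfolding inj_on_def by blast
  then show False using Mpos by simp
qed

lemma perm_par:
  assumes "even N" "N \<ge> 2" "perm_poly N p"
  shows "odd (poly p (z+1) - poly p z)"
proof -
  have diff: "poly p 1 mod 2 \<noteq> poly p 0 mod 2"
  proof
    assume h: "poly p 1 mod 2 = poly p 0 mod 2"
    have all: "poly p k mod 2 = poly p 0 mod 2" for k
    proof (cases "k mod 2 = 0")
      case True then show ?thesis using poly_mod_cong[of k 2 0 p] by simp
    next
      case False then have "k mod 2 = 1 mod 2" by presburger
      then show ?thesis using poly_mod_cong[of k 2 1 p] h by simp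
    qed
    have surj: "(\<lambda>k. poly p k mod N) ` {0..<N} = {0..<N}"
      using assms(3) unfolding perm_poly_def bij_betw_def by blast
    have "0 \<in> {0..<N}" "1 \<in> {0..<N}" using assms by auto
    then have "0 \<in> (\<lambda>k. poly p k mod N) ` {0..<N}" "1 \<in> (\<lambda>k. poly p k mod N) ` {0..<N}"
      unfolding surj by auto
    then obtain k0 k1 where k01: "poly p k0 mod N = 0" "poly p k1 mod N = 1"
      by (auto simp del: atLeastLessThan_iff)
    have "poly p k0 mod 2 = (poly p k0 mod N) mod 2" "poly p k1 mod 2 = (poly p k1 mod N) mod 2"
      using mod_mod_cancel[of 2 N] assms(1) by simp_all
    then have "poly p k0 mod 2 = 0" "poly p k1 mod 2 = 1" using k01 by simp_all
    with all[of k0] all[of k1] show False by simp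
  qed
  show ?thesis
  proof (cases "z mod 2 = 0")
    case True
    then have "poly p z mod 2 = poly p 0 mod 2" using poly_mod_cong[of z 2 0 p] by simp
    moreover have "poly p (z+1) mod 2 = poly p 1 mod 2" using True poly_mod_cong[of "z+1" 2 1 p]
      by (simp add: mod_add_left_eq[symmetric])
    ultimately show ?thesis using diff by (simp add: mod_eq_dvd_iff[symmetric])
  next
    case False
    then have z1: "z mod 2 = 1" by presburger
    then have "poly p z mod 2 = poly p 1 mod 2" using poly_mod_cong[of z 2 1 p] by simp
    moreover have "poly p (z+1) mod 2 = poly p 0 mod 2" using z1 poly_mod_cong[of "z+1" 2 0 p]
      by (simp add: mod_add_left_eq[symmetric])
    ultimately show ?thesis using diff by (simp add: mod_eq_dvd_iff[symmetric])
  qed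
qed

lemma core:
  fixes p :: "int poly"
  assumes "n \<ge> 2" "N = 2^n" "perm_poly N p" "0 < d" "d < N"
  shows "\<exists>t\<ge>0. \<forall>x. (2*N) dvd ((poly p (x+t+d) + l)^2 - (poly p (x+t) + l)^2
           - (poly p (x+d) + l)^2 + (poly p x + l)^2 - N)"
proof -
  define M :: int where "M = 2^(n-1)"
  have NM: "N = 2*M" using assms(1,2) unfolding M_def
    by (metis Suc_diff_1 less_le_trans pos2 power_Suc)
  have Mev: "even M" using assms(1) unfolding M_def by (simp add: dvd_power)
  have Nev: "even N" using NM by simp
  have N2: "N \<ge> 2" using NM Mev unfolding M_def by simp
  have od: "\<forall>z. odd (poly (pderiv p) z)" using perm_deriv_odd assms(1,2,3) by blast
  have op: "\<forall>z. odd (poly p (z+1) - poly p z)" using perm_par Nev N2 assms(3) by blast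
  obtain v q where d: "d = 2^v*q" "odd q" using pow2_odd assms(4) by blast
  have "v < n"
  proof (rule ccontr)
    assume "\<not> v < n"
    then have h1: "(2::int)^n \<le> 2^v" by (simp add: power_increasing)
    have "q > 0" using assms(4) d(1) by (simp add: zero_less_mult_iff)
    then have "2^v \<le> d" using d(1) by simp
    with h1 show False using assms(2,5) by linarith
  qed
  define w where "w = n - 1 - v"
  define t :: int where "t = 2^w"
  have vw: "v + w = n - 1" using \<open>v < n\<close> unfolding w_def by simp
  have pvw: "(2::int)^v * 2^w = M" unfolding M_def vw[symmetric] by (simp add: power_add)
  show ?thesis
  proof (intro exI[of _ t] conjI allI)
    show "0 \<le> t" unfolding t_def by simp
  next
    fix x
    have E: "N dvd (poly p (x+t+d) - poly p (x+t) - poly p (x+d) + poly p x)"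
    proof -
      obtain m2 where m2: "M = 2*m2" using Mev by (auto elim: evenE)
      consider "v = 0" | "w = 0" | "v \<ge> 1 \<and> w \<ge> 1" by linarith
      then show ?thesis
      proof cases
        case 1
        then have tM: "t = M" unfolding t_def M_def w_def by simp
        have "N dvd t^2" unfolding tM NM by (simp add: m2 power2_eq_square)
        moreover have "N dvd 2*t" unfolding tM NM by simp
        ultimately show ?thesis using L[of N t p x d] od by simp
      next
        case 2
        then have t1: "t = 1" unfolding t_def by simp
        have dM: "d = M*q" using d(1) pvw 2 by simp
        have "N dvd d^2" unfolding dM NM by (simp add: m2 power2_eq_square)
        moreover have "N dvd 2*d" unfolding dM NM by simp
        ultimately have "N dvd (poly p (x+d+t) - poly p (x+d) - poly p (x+t) + poly p x)"
          using L[of N d p x t] od by simp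
        then show ?thesis by (simp add: algebra_simps)
      next
        case 3
        have "even d" using 3 d(1) by simp
        moreover have "even t" using 3 unfolding t_def by simp
        ultimately have "(2*d*t) dvd (poly p (x+d+t) - poly p (x+d) - poly p (x+t) + poly p x)"
          by (rule C1)
        moreover have "2*d*t = N*q" unfolding d(1) t_def NM pvw[symmetric] by (simp add: algebra_simps)
        ultimately have "N*q dvd (poly p (x+d+t) - poly p (x+d) - poly p (x+t) + poly p x)" by simp
        then have "N dvd (poly p (x+d+t) - poly p (x+d) - poly p (x+t) + poly p x)" by (rule dvd_mult_left)
        then show ?thesis by (simp add: algebra_simps)
      qed
    qed
    obtain r1 where r1: "odd r1" "poly p (x + d) - poly p x = 2^v*r1"
      using F1[OF od op d(2), of x v] d(1) by auto
    have "\<exists>r. odd r \<and> poly p (x + 2^w*1) - poly p x = 2^w * r"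
      by (rule F1[OF od op]) simp
    then obtain r2 where r2: "odd r2" "poly p (x + t) - poly p x = 2^w*r2"
      unfolding t_def by auto
    have prod: "((poly p (x+d) + l) - (poly p x + l)) * ((poly p (x+t) + l) - (poly p x + l)) = M*(r1*r2)"
      using r1(2) r2(2) pvw by (simp add: algebra_simps)
    have E': "N dvd ((poly p (x+t+d) + l) - (poly p (x+t) + l) - (poly p (x+d) + l) + (poly p x + l))"
      using E by (simp add: algebra_simps)
    show "(2*N) dvd ((poly p (x+t+d) + l)^2 - (poly p (x+t) + l)^2
           - (poly p (x+d) + l)^2 + (poly p x + l)^2 - N)"
    proof -
      have "odd (r1*r2)" using r1(1) r2(1) by simp
      then show ?thesis by (rule sq_core[OF E' prod _ NM])
    qed
  qed
qed



definition cc :: "int \<Rightarrow> int \<Rightarrow> complex" where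
  "cc N X = cis (pi * of_int X / of_int N)"

lemma cc_cong:
  assumes "N \<noteq> 0" "(2*N) dvd (X - Y)"
  shows "cc N X = cc N Y"
proof -
  obtain j where j: "X = Y + 2*N*j" using assms(2) by (metis dvdE diff_add_cancel add.commute)
  have eq: "pi * of_int X / of_int N = pi * of_int Y / of_int N + 2*pi*of_int j"
    using assms(1) unfolding j by (simp add: field_simps)
  have "cc N X = cis (pi * of_int Y / of_int N + 2*pi*of_int j)"
    unfolding cc_def eq ..
  also have "... = cis (pi * of_int Y / of_int N) * cis (2*pi*of_int j)"
    by (rule cis_mult[symmetric])
  also have "cis (2*pi*of_int j) = 1" by (rule cis_multiple_2pi) simp
  finally show ?thesis unfolding cc_def by simp
qed

lemma cc_add_N:
  assumes "N \<noteq> 0"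
  shows "cc N (X + N) = - cc N X"
proof -
  have "pi * of_int (X + N) / of_int N = pi * of_int X / of_int N + pi"
    using assms by (simp add: field_simps)
  then show ?thesis unfolding cc_def by (simp add: cis_mult[symmetric])
qed

lemma sq_cong:
  fixes x y N :: int
  assumes "N dvd (x - y)" "even N"
  shows "(2*N) dvd (x^2 - y^2)"
proof -
  obtain j where j: "x = y + N*j" using assms(1) by (metis dvdE diff_add_cancel add.commute)
  obtain h where h: "N = 2*h" using assms(2) by (auto elim: evenE)
  have "x^2 - y^2 = (2*N) * (y*j + h*j^2)" unfolding j by (simp add: h algebra_simps power2_eq_square)
  then show ?thesis by simp
qed

lemma shift1:
  fixes T :: "int \<Rightarrow> complex"
  assumes "\<forall>k. T (k+N) = T k" "0 < N"
  shows "(\<Sum>k\<in>{0..<N}. T (k+1)) = (\<Sum>k\<in>{0..<N}. T k)"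
proof -
  have "(\<Sum>k\<in>{0..<N}. T (k+1)) = sum T ((\<lambda>k. k+1) ` {0..<N})"
    by (subst sum.reindex) (auto simp: inj_on_def)
  also have "(\<lambda>k. k+1) ` {0..<N} = {1..<N+1}" by simp
  also have "{1..<N+1} = insert N {1..<N}" using assms(2) by auto
  also have "sum T (insert N {1..<N}) = T N + sum T {1..<N}" by simp
  also have "T N = T 0" using assms(1)[rule_format, of 0] by simp
  also have "T 0 + sum T {1..<N} = sum T (insert 0 {1..<N})" by simp
  also have "insert 0 {1..<N} = {0..<N}" using assms(2) by auto
  finally show ?thesis .
qed

lemma shiftm:
  fixes T :: "int \<Rightarrow> complex"
  assumes "\<forall>k. T (k+N) = T k" "0 < N"
  shows "(\<Sum>k\<in>{0..<N}. T (k + int m)) = (\<Sum>k\<in>{0..<N}. T k)"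
proof (induct m)
  case 0 then show ?case by simp
next
  case (Suc m)
  have "(\<Sum>k\<in>{0..<N}. T (k + int (Suc m))) = (\<Sum>k\<in>{0..<N}. (\<lambda>k. T (k + int m)) (k+1))"
    by (simp add: algebra_simps)
  also have "... = (\<Sum>k\<in>{0..<N}. T (k + int m))"
  proof (rule shift1[OF _ assms(2)], intro allI)
    fix k
    have "T (k + N + int m) = T ((k + int m) + N)" by (simp add: ac_simps)
    also have "... = T (k + int m)" using assms(1) by blast
    finally show "T (k + N + int m) = T (k + int m)" .
  qed
  finally show ?case using Suc by simp
qed

lemma zc_cis: "zc_seq N u l k = cis (- (pi * of_int (u * (k^2 + (N mod 2)*k + 2*l*k)) / of_int N))"
  unfolding zc_seq_def cis_conv_exp by (simp add: algebra_simps)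

lemma part_i:
  assumes "n \<ge> 2" "N = 2^n" "is_zadoff_chu N s" "perm_poly N p"
  shows "is_CAZAC N (s \<circ> perm_of_poly N p)"
proof -
  obtain u l where ul: "gcd u N = 1" "\<forall>k\<in>{0..<N}. s k = zc_seq N u l k"
    using assms(3) unfolding is_zadoff_chu_def by (elim exE conjE) (rule that, assumption+)
  have Npos: "N > 0" using assms(2) by simp
  have Nev: "even N" using assms(1,2) by simp
  have uodd: "odd u"
  proof
    assume "even u"
    then have "2 dvd gcd u N" using Nev by simp
    then show False using ul(1) by simp
  qed
  have N2: "N mod 2 = 0" using Nev by simp
  have sv: "s k = cis (- (pi * of_int (u * (k^2 + 2*l*k)) / of_int N))" if "k \<in> {0..<N}" for k
    using ul(2) that N2 zc_cis by simp
  have rng: "perm_of_poly N p k \<in> {0..<N}" for k unfolding perm_of_poly_def using Npos by simp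
  show ?thesis unfolding is_CAZAC_def
  proof (intro conjI ballI allI impI)
    fix k assume "k \<in> {0..<N}"
    show "cmod ((s \<circ> perm_of_poly N p) k) = 1" using sv[OF rng[of k]] by simp
  next
    fix d assume d: "0 < d \<and> d < N"
    define Q where "Q z = poly p z + l" for z
    define T where "T k = cc N (u * ((Q (k+d))^2 - (Q k)^2))" for k
    have hterm: "(s \<circ> perm_of_poly N p) k * cnj ((s \<circ> perm_of_poly N p) ((k + d) mod N)) = T k" for k
    proof -
      define a where "a = poly p k mod N"
      define b where "b = poly p (k+d) mod N"
      have a: "perm_of_poly N p k = a" unfolding a_def perm_of_poly_def ..
      have b: "perm_of_poly N p ((k+d) mod N) = b" unfolding b_def perm_of_poly_def
        by (rule poly_mod_cong) simp
      have ar: "a \<in> {0..<N}" "b \<in> {0..<N}" using Npos a_def b_def by auto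
      have "(s \<circ> perm_of_poly N p) k * cnj ((s \<circ> perm_of_poly N p) ((k + d) mod N))
           = cis (- (pi * of_int (u * (a^2 + 2*l*a)) / of_int N)) * cis (pi * of_int (u * (b^2 + 2*l*b)) / of_int N)"
        using sv[OF ar(1)] sv[OF ar(2)] a b by (simp add: cis_cnj)
      also have "... = cc N (u * (b^2 + 2*l*b) - u*(a^2 + 2*l*a))"
        unfolding cc_def cis_mult by (rule arg_cong[where f=cis]) (simp add: right_diff_distrib diff_divide_distrib)
      also have "... = T k" unfolding T_def
      proof (rule cc_cong)
        show "N \<noteq> 0" using Npos by simp
        have "N dvd (b - poly p (k+d))" unfolding mod_eq_dvd_iff[symmetric] b_def by simp
        then have h1: "(2*N) dvd ((b + l)^2 - (Q (k+d))^2)"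
          by (intro sq_cong[OF _ Nev]) (simp add: Q_def)
        have "N dvd (a - poly p k)" unfolding mod_eq_dvd_iff[symmetric] a_def by simp
        then have h2: "(2*N) dvd ((a + l)^2 - (Q k)^2)"
          by (intro sq_cong[OF _ Nev]) (simp add: Q_def)
        have eq: "u*(b^2+2*l*b) - u*(a^2+2*l*a) - u*((Q (k+d))^2 - (Q k)^2)
            = u * (((b+l)^2 - (Q (k+d))^2) - ((a+l)^2 - (Q k)^2))"
          by (simp add: algebra_simps power2_eq_square)
        show "(2*N) dvd (u*(b^2+2*l*b) - u*(a^2+2*l*a) - u*((Q (k+d))^2 - (Q k)^2))"
          unfolding eq using h1 h2 by (simp add: dvd_diff)
      qed
      finally show ?thesis .
    qed
    have ac: "autocorr N (s \<circ> perm_of_poly N p) d = (\<Sum>k\<in>{0..<N}. T k)"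
      unfolding autocorr_def using hterm by simp
    have per: "\<forall>k. T (k+N) = T k"
    proof
      fix k
      have "N dvd (poly p (k+N+d) - poly p (k+d))"
        unfolding mod_eq_dvd_iff[symmetric] by (rule poly_mod_cong) (simp add: ac_simps)
      then have h1: "(2*N) dvd ((Q (k+N+d))^2 - (Q (k+d))^2)"
        by (intro sq_cong[OF _ Nev]) (simp add: Q_def)
      have "N dvd (poly p (k+N) - poly p k)"
        unfolding mod_eq_dvd_iff[symmetric] by (rule poly_mod_cong) simp
      then have h2: "(2*N) dvd ((Q (k+N))^2 - (Q k)^2)"
        by (intro sq_cong[OF _ Nev]) (simp add: Q_def)
      have eq: "u * ((Q (k+N+d))^2 - (Q (k+N))^2) - u * ((Q (k+d))^2 - (Q k)^2)
          = u * (((Q (k+N+d))^2 - (Q (k+d))^2) - ((Q (k+N))^2 - (Q k)^2))"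
        by (simp add: algebra_simps)
      have "(2*N) dvd (u * ((Q (k+N+d))^2 - (Q (k+N))^2) - u * ((Q (k+d))^2 - (Q k)^2))"
        unfolding eq using h1 h2 by (simp add: dvd_diff)
      then have "cc N (u * ((Q (k+N+d))^2 - (Q (k+N))^2)) = T k"
        unfolding T_def using Npos by (intro cc_cong) simp_all
      then show "T (k+N) = T k" unfolding T_def by (simp add: ac_simps)
    qed
    obtain t where t: "t \<ge> 0" "\<forall>x. (2*N) dvd ((poly p (x+t+d) + l)^2 - (poly p (x+t) + l)^2
           - (poly p (x+d) + l)^2 + (poly p x + l)^2 - N)"
      using core[OF assms(1,2,4), of d l] d by blast
    have neg: "T (k+t) = - T k" for k
    proof -
      define Z where "Z = (Q (k+t+d))^2 - (Q (k+t))^2 - (Q (k+d))^2 + (Q k)^2 - N"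
      have hZ: "(2*N) dvd Z" using t(2) unfolding Z_def Q_def by blast
      obtain r where r: "u = 2*r + 1" using uodd by (metis oddE)
      have eq: "u * ((Q (k+t+d))^2 - (Q (k+t))^2) - (u * ((Q (k+d))^2 - (Q k)^2) + N) = u*Z + (2*N)*r"
        unfolding Z_def r by (simp add: algebra_simps)
      have "(2*N) dvd (u * ((Q (k+t+d))^2 - (Q (k+t))^2) - (u * ((Q (k+d))^2 - (Q k)^2) + N))"
        unfolding eq using hZ by simp
      then have "cc N (u * ((Q (k+t+d))^2 - (Q (k+t))^2)) = cc N (u * ((Q (k+d))^2 - (Q k)^2) + N)"
        using Npos by (intro cc_cong) simp_all
      also have "... = - T k" unfolding T_def using Npos by (simp add: cc_add_N)
      finally show ?thesis unfolding T_def by (simp add: ac_simps)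
    qed
    have "(\<Sum>k\<in>{0..<N}. T k) = (\<Sum>k\<in>{0..<N}. T (k + int (nat t)))"
      using shiftm[OF per Npos, of "nat t"] t(1) by simp
    also have "... = - (\<Sum>k\<in>{0..<N}. T k)" using neg t(1) by (simp add: sum_negf)
    finally have "(\<Sum>k\<in>{0..<N}. T k) = 0" by simp
    then show "autocorr N (s \<circ> perm_of_poly N p) d = 0" using ac by simp
  qed
qed

lemma finite_order:
  assumes "bij_betw f A A" "finite A"
  shows "\<exists>m>0. \<forall>k\<in>A. (f ^^ m) k = k"
proof -
  define F where "F i = restrict (f ^^ i) A" for i
  have "range F \<subseteq> A \<rightarrow>\<^sub>E A"
  proof
    fix g assume "g \<in> range F"
    then obtain i where i: "g = F i" by blast
    have "bij_betw (f ^^ i) A A" by (rule bij_betw_funpow[OF assms(1)])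
    then show "g \<in> A \<rightarrow>\<^sub>E A" unfolding i F_def restrict_PiE_iff
      by (auto simp: bij_betw_def)
  qed
  moreover have "finite (A \<rightarrow>\<^sub>E A)" using assms(2) by (intro finite_PiE) auto
  ultimately have "finite (range F)" by (rule finite_subset)
  then have "\<not> inj F" using finite_imageD infinite_UNIV_nat by blast
  then obtain i j where ij: "i \<noteq> j" "F i = F j" unfolding inj_def by blast
  have gen: "\<exists>m>0. \<forall>k\<in>A. (f ^^ m) k = k" if "i < j" "F i = F j" for i j
  proof (intro exI[of _ "j - i"] conjI ballI)
    show "0 < j - i" using that by simp
    fix k assume k: "k \<in> A"
    have inj: "inj_on (f ^^ i) A" using bij_betw_funpow[OF assms(1)] bij_betw_def by blast
    have kA: "(f ^^ (j - i)) k \<in> A" using bij_betw_funpow[OF assms(1), of "j-i"] k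
      by (auto simp: bij_betw_def)
    have "(f ^^ i) ((f ^^ (j - i)) k) = (f ^^ (i + (j - i))) k"
      by (simp add: funpow_add)
    also have "... = (f ^^ j) k" using that(1) by simp
    also have "... = (f ^^ i) k" using that(2) k unfolding F_def by (metis restrict_apply')
    finally show "(f ^^ (j - i)) k = k" using inj kA k unfolding inj_on_def by blast
  qed
  show ?thesis
  proof (cases "i < j")
    case True then show ?thesis using gen ij by blast
  next
    case False then have "j < i" using ij by simp
    then show ?thesis using gen ij by metis
  qed
qed

fun piter :: "int poly \<Rightarrow> nat \<Rightarrow> int poly" where
  "piter p 0 = [:0, 1:]"
| "piter p (Suc m) = pcompose p (piter p m)"

lemma piter_eval:
  assumes "k \<in> {0..<N}"
  shows "poly (piter p m) k mod N = (perm_of_poly N p ^^ m) k"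
proof (induct m)
  case 0 then show ?case using assms by simp
next
  case (Suc m)
  have "poly (piter p (Suc m)) k mod N = poly p (poly (piter p m) k) mod N"
    by (simp add: poly_pcompose)
  also have "... = poly p (poly (piter p m) k mod N) mod N"
    by (rule poly_mod_cong) simp
  also have "... = perm_of_poly N p ((perm_of_poly N p ^^ m) k)"
    unfolding Suc perm_of_poly_def ..
  finally show ?case by simp
qed

lemma cazac_cong:
  assumes "\<forall>k\<in>{0..<N}. y k = z k" "0 < N"
  shows "is_CAZAC N y = is_CAZAC N z"
proof -
  have "autocorr N y d = autocorr N z d" for d
    unfolding autocorr_def using assms by (intro sum.cong) auto
  then show ?thesis unfolding is_CAZAC_def using assms(1) by auto
qed

theorem theorem2:
  fixes n :: nat and N :: int and s :: "int \<Rightarrow> complex" and p :: "int poly"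
  assumes "n \<ge> 2"
    and "N = 2 ^ n"
    and "is_zadoff_chu N s"
    and "perm_poly N p"
  shows "is_CAZAC N (s \<circ> perm_of_poly N p) \<and> is_CAZAC N (s \<circ> inv_perm_of_poly N p)"
proof
  show "is_CAZAC N (s \<circ> perm_of_poly N p)" by (rule part_i[OF assms])
  have Npos: "N > 0" using assms(2) by simp
  let ?A = "{0..<N}" and ?f = "perm_of_poly N p"
  have bij: "bij_betw ?f ?A ?A" using assms(4) unfolding perm_poly_def perm_of_poly_def .
  obtain m where m: "m > 0" "\<forall>k\<in>?A. (?f ^^ m) k = k"
    using finite_order[OF bij] by auto
  define q where "q = piter p (m - 1)"
  have qeval: "perm_of_poly N q k = (?f ^^ (m-1)) k" if "k \<in> ?A" for k
    unfolding q_def using piter_eval[OF that] by (simp add: perm_of_poly_def)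
  have inv: "inv_perm_of_poly N p k = perm_of_poly N q k" if k: "k \<in> ?A" for k
  proof -
    have yA: "(?f ^^ (m-1)) k \<in> ?A" using bij_betw_funpow[OF bij, of "m-1"] k
      by (auto simp: bij_betw_def)
    have "?f ((?f ^^ (m-1)) k) = (?f ^^ m) k"
      using m(1) by (metis Suc_diff_1 comp_apply funpow.simps(2))
    also have "... = k" using m(2) k by blast
    finally have "inv_perm_of_poly N p k = inv_perm_of_poly N p (?f ((?f ^^ (m-1)) k))" by simp
    also have "... = (?f ^^ (m-1)) k" unfolding inv_perm_of_poly_def
      using bij yA by (simp add: bij_betw_def inv_into_f_f)
    finally show ?thesis using qeval[OF k] by simp
  qed
  have "bij_betw (?f ^^ (m-1)) ?A ?A" by (rule bij_betw_funpow[OF bij])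
  moreover have "bij_betw (perm_of_poly N q) ?A ?A = bij_betw (?f ^^ (m-1)) ?A ?A"
    by (rule bij_betw_cong) (rule qeval)
  ultimately have "bij_betw (perm_of_poly N q) ?A ?A" by simp
  then have pq: "perm_poly N q" unfolding perm_poly_def perm_of_poly_def .
  have "is_CAZAC N (s \<circ> perm_of_poly N q)" by (rule part_i[OF assms(1-3) pq])
  moreover have "\<forall>k\<in>?A. (s \<circ> inv_perm_of_poly N p) k = (s \<circ> perm_of_poly N q) k"
    using inv by simp
  ultimately show "is_CAZAC N (s \<circ> inv_perm_of_poly N p)" using cazac_cong Npos by blast
qed

end
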